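(* Let $L$ be a semiprime right Leibniz algebra and $Q$ an algebra of quotients of $L$. Then for every essential ideal $I$ of $L$, $Q$ is also an algebra of quotients of $I$.
   Context: A right Leibniz algebra satisfies $[x,[y,z]]=[[x,y],z]-[[x,z],y]$. Ideals: subspaces $I$ with $[I,L]\subseteq I$, $[L,I]\subseteq I$; $L$ is semiprime if $[I,I]\ne\{0\}$ for every nonzero ideal $I$; an ideal is essential if it meets every nonzero ideal nontrivially. For a subalgebra $K$ of $Q$ and $q\in Q$: for $x\in K$ let $R_x(u)=[u,x]$, $L_x(u)=[x,u]$ on $Q$, $\mathscr{A}(K)$ the associative algebra they generate, ${}_K(q)=\mathbb{F}q+\{\sum\xi_i(q):\xi_i\in\mathscr{A}(K)\}$, $(K:q)=\{x\in K:[x,{}_K(q)]\subseteq K,[{}_K(q),x]\subseteq K\}$. $Q$ is an algebra of quotients of $K$ if for all $p,q\in Q$, $p\ne0$, there is $x\in(K:q)$ with $[x,p]\ne0$ or $y\in(K:q)$ with $[p,y]\ne0$. *)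

theory Defs
  imports Main "HOL.Vector_Spaces"
begin

definition leibniz_alg :: "('k::field \<Rightarrow> 'v::ab_group_add \<Rightarrow> 'v) \<Rightarrow> ('v \<Rightarrow> 'v \<Rightarrow> 'v) \<Rightarrow> bool" where
  "leibniz_alg scale br \<longleftrightarrow>
     vector_space scale \<and>
     (\<forall>x y z. br (x + y) z = br x z + br y z) \<and>
     (\<forall>x y z. br x (y + z) = br x y + br x z) \<and>
     (\<forall>c x y. br (scale c x) y = scale c (br x y)) \<and>
     (\<forall>c x y. br x (scale c y) = scale c (br x y)) \<and>
     (\<forall>x y z. br x (br y z) = br (br x y) z - br (br x z) y)"

definition subalg :: "('k::field \<Rightarrow> 'v::ab_group_add \<Rightarrow> 'v) \<Rightarrow> ('v \<Rightarrow> 'v \<Rightarrow> 'v) \<Rightarrow> 'v set \<Rightarrow> bool" where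
  "subalg scale br K \<longleftrightarrow> module.subspace scale K \<and> (\<forall>x\<in>K. \<forall>y\<in>K. br x y \<in> K)"

definition ideal_of :: "('k::field \<Rightarrow> 'v::ab_group_add \<Rightarrow> 'v) \<Rightarrow> ('v \<Rightarrow> 'v \<Rightarrow> 'v) \<Rightarrow> 'v set \<Rightarrow> 'v set \<Rightarrow> bool" where
  "ideal_of scale br L I \<longleftrightarrow> I \<subseteq> L \<and> module.subspace scale I \<and>
     (\<forall>x\<in>I. \<forall>y\<in>L. br x y \<in> I \<and> br y x \<in> I)"

text \<open>[I,I] \<noteq> {0} iff some bracket of elements of I is nonzero.\<close>
definition semiprime :: "('k::field \<Rightarrow> 'v::ab_group_add \<Rightarrow> 'v) \<Rightarrow> ('v \<Rightarrow> 'v \<Rightarrow> 'v) \<Rightarrow> 'v set \<Rightarrow> bool" where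
  "semiprime scale br L \<longleftrightarrow>
     (\<forall>I. ideal_of scale br L I \<and> I \<noteq> {0} \<longrightarrow> (\<exists>x\<in>I. \<exists>y\<in>I. br x y \<noteq> 0))"

definition essential_ideal :: "('k::field \<Rightarrow> 'v::ab_group_add \<Rightarrow> 'v) \<Rightarrow> ('v \<Rightarrow> 'v \<Rightarrow> 'v) \<Rightarrow> 'v set \<Rightarrow> 'v set \<Rightarrow> bool" where
  "essential_ideal scale br L I \<longleftrightarrow> ideal_of scale br L I \<and>
     (\<forall>J. ideal_of scale br L J \<and> J \<noteq> {0} \<longrightarrow> I \<inter> J \<noteq> {0})"

text \<open>The associative algebra \<A>(K) of operators on Q generated by the R_x, L_x (x \<in> K).\<close>
inductive_set mult_alg :: "('k::field \<Rightarrow> 'v::ab_group_add \<Rightarrow> 'v) \<Rightarrow> ('v \<Rightarrow> 'v \<Rightarrow> 'v) \<Rightarrow> 'v set \<Rightarrow> ('v \<Rightarrow> 'v) set"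
  for scale :: "'k::field \<Rightarrow> 'v::ab_group_add \<Rightarrow> 'v" and br :: "'v \<Rightarrow> 'v \<Rightarrow> 'v" and K :: "'v set" where
  R_gen: "x \<in> K \<Longrightarrow> (\<lambda>u. br u x) \<in> mult_alg scale br K"
| L_gen: "x \<in> K \<Longrightarrow> (\<lambda>u. br x u) \<in> mult_alg scale br K"
| comp: "f \<in> mult_alg scale br K \<Longrightarrow> g \<in> mult_alg scale br K \<Longrightarrow> f \<circ> g \<in> mult_alg scale br K"
| add: "f \<in> mult_alg scale br K \<Longrightarrow> g \<in> mult_alg scale br K \<Longrightarrow> (\<lambda>u. f u + g u) \<in> mult_alg scale br K"
| smult: "f \<in> mult_alg scale br K \<Longrightarrow> (\<lambda>u. scale c (f u)) \<in> mult_alg scale br K"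

text \<open>{}_K(q) = F q + { \<Sum> \<xi>_i(q) : \<xi>_i \<in> \<A>(K) }  (the algebra is closed under sums).\<close>
definition gen_by :: "('k::field \<Rightarrow> 'v::ab_group_add \<Rightarrow> 'v) \<Rightarrow> ('v \<Rightarrow> 'v \<Rightarrow> 'v) \<Rightarrow> 'v set \<Rightarrow> 'v \<Rightarrow> 'v set" where
  "gen_by scale br K q = {scale c q + s | c s. s = 0 \<or> (\<exists>\<xi>\<in>mult_alg scale br K. s = \<xi> q)}"

definition colon :: "('k::field \<Rightarrow> 'v::ab_group_add \<Rightarrow> 'v) \<Rightarrow> ('v \<Rightarrow> 'v \<Rightarrow> 'v) \<Rightarrow> 'v set \<Rightarrow> 'v \<Rightarrow> 'v set" where
  "colon scale br K q = {x \<in> K. \<forall>u\<in>gen_by scale br K q. br x u \<in> K \<and> br u x \<in> K}"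

text \<open>The whole algebra (type 'v) is an algebra of quotients of K.\<close>
definition alg_of_quotients :: "('k::field \<Rightarrow> 'v::ab_group_add \<Rightarrow> 'v) \<Rightarrow> ('v \<Rightarrow> 'v \<Rightarrow> 'v) \<Rightarrow> 'v set \<Rightarrow> bool" where
  "alg_of_quotients scale br K \<longleftrightarrow>
     (\<forall>p q. p \<noteq> 0 \<longrightarrow> (\<exists>x\<in>colon scale br K q. br x p \<noteq> 0) \<or> (\<exists>y\<in>colon scale br K q. br p y \<noteq> 0))"

end

theory Submission
  imports Defs
begin

locale lb =
  fixes scale :: "'k::field \<Rightarrow> 'v::ab_group_add \<Rightarrow> 'v"
    and br :: "'v \<Rightarrow> 'v \<Rightarrow> 'v"
  assumes LA: "leibniz_alg scale br"
begin

lemma vs: "vector_space scale" using LA by (simp add: leibniz_alg_def)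

interpretation V: vector_space scale by (rule vs)

lemma addl: "br (x + y) z = br x z + br y z" using LA by (simp add: leibniz_alg_def)
lemma addr: "br x (y + z) = br x y + br x z" using LA by (simp add: leibniz_alg_def)
lemma scl: "br (scale c x) y = scale c (br x y)" using LA by (simp add: leibniz_alg_def)
lemma scr: "br x (scale c y) = scale c (br x y)" using LA by (simp add: leibniz_alg_def)
lemma leib: "br x (br y z) = br (br x y) z - br (br x z) y" using LA by (simp add: leibniz_alg_def)
lemma leib2: "br (br x y) z = br x (br y z) + br (br x z) y" using leib[of x y z] by (simp add: algebra_simps)

lemma zl[simp]: "br 0 z = 0" using addl[of 0 0 z] by simp
lemma zr[simp]: "br z 0 = 0" using addr[of z 0 0] by simp
lemma negl: "br (- x) z = - br x z"
proof -
  have "br x z + br (-x) z = 0" using addl[of x "-x" z] by simp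
  thus ?thesis by (metis minus_unique)
qed
lemma negr: "br z (- x) = - br z x"
proof -
  have "br z x + br z (-x) = 0" using addr[of z x "-x"] by simp
  thus ?thesis by (metis minus_unique)
qed
lemma diffl: "br (x - y) z = br x z - br y z" using addl[of x "-y" z] negl[of y z] by simp
lemma diffr: "br z (x - y) = br z x - br z y" using addr[of z x "-y"] negr[of z y] by simp

lemma sub: "module.subspace scale S = V.subspace S" by simp

lemma ideal_inter:
  assumes "ideal_of scale br L A" "ideal_of scale br L B"
  shows "ideal_of scale br L (A \<inter> B)"
  using assms unfolding ideal_of_def V.subspace_def by auto

lemma ideal_sub: "ideal_of scale br L A \<Longrightarrow> V.subspace A"
  unfolding ideal_of_def by simp

lemma ann_ideal:
  assumes L: "subalg scale br L" and K: "ideal_of scale br L K"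
  shows "ideal_of scale br L {w\<in>L. \<forall>k\<in>K. br k w = 0 \<and> br w k = 0}"
proof -
  have LS: "V.subspace L" and LC: "\<And>x y. x \<in> L \<Longrightarrow> y \<in> L \<Longrightarrow> br x y \<in> L"
    using L unfolding subalg_def by auto
  have KL: "\<And>k l. k \<in> K \<Longrightarrow> l \<in> L \<Longrightarrow> br k l \<in> K \<and> br l k \<in> K"
    using K unfolding ideal_of_def by auto
  show ?thesis unfolding ideal_of_def
  proof (intro conjI)
    show "V.subspace {w \<in> L. \<forall>k\<in>K. br k w = 0 \<and> br w k = 0}"
    proof (rule V.subspaceI)
      show "0 \<in> {w \<in> L. \<forall>k\<in>K. br k w = 0 \<and> br w k = 0}" using V.subspace_0[OF LS] by simp
      fix x y c assume x: "x \<in> {w \<in> L. \<forall>k\<in>K. br k w = 0 \<and> br w k = 0}"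
      show "scale c x \<in> {w \<in> L. \<forall>k\<in>K. br k w = 0 \<and> br w k = 0}"
        using x V.subspace_scale[OF LS] by (simp add: scl scr)
      assume y: "y \<in> {w \<in> L. \<forall>k\<in>K. br k w = 0 \<and> br w k = 0}"
      show "x + y \<in> {w \<in> L. \<forall>k\<in>K. br k w = 0 \<and> br w k = 0}"
        using x y V.subspace_add[OF LS] by (simp add: addl addr)
    qed
    show "\<forall>x\<in>{w \<in> L. \<forall>k\<in>K. br k w = 0 \<and> br w k = 0}.
     \<forall>y\<in>L. br x y \<in> {w \<in> L. \<forall>k\<in>K. br k w = 0 \<and> br w k = 0} \<and>
            br y x \<in> {w \<in> L. \<forall>k\<in>K. br k w = 0 \<and> br w k = 0}"
    proof (intro ballI conjI)
      fix a l assume a: "a \<in> {w \<in> L. \<forall>k\<in>K. br k w = 0 \<and> br w k = 0}" and l: "l \<in> L"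
      have aL: "a \<in> L" and ak: "\<And>k. k \<in> K \<Longrightarrow> br k a = 0 \<and> br a k = 0" using a by auto
      show "br a l \<in> {w \<in> L. \<forall>k\<in>K. br k w = 0 \<and> br w k = 0}"
      proof (safe)
        show "br a l \<in> L" using LC aL l by simp
        fix k assume k: "k \<in> K"
        show "br k (br a l) = 0" using ak[OF k] ak[of "br k l"] KL[OF k l] leib[of k a l] by simp
        show "br (br a l) k = 0" using ak[OF k] ak[of "br l k"] KL[OF k l] leib2[of a l k] by simp
      qed
      show "br l a \<in> {w \<in> L. \<forall>k\<in>K. br k w = 0 \<and> br w k = 0}"
      proof (safe)
        show "br l a \<in> L" using LC aL l by simp
        fix k assume k: "k \<in> K"
        show "br k (br l a) = 0" using ak[OF k] ak[of "br k l"] KL[OF k l] leib[of k l a] by simp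
        show "br (br l a) k = 0" using ak[OF k] ak[of "br l k"] KL[OF k l] leib2[of l a k] by simp
      qed
    qed
  qed auto
qed

lemma S1:
  assumes L: "subalg scale br L" and sp: "semiprime scale br L" and K: "ideal_of scale br L K"
    and m: "m \<in> K" and mk: "\<And>k. k \<in> K \<Longrightarrow> br k m = 0 \<and> br m k = 0"
  shows "m = 0"
proof -
  let ?A = "{w\<in>L. \<forall>k\<in>K. br k w = 0 \<and> br w k = 0}"
  have T: "ideal_of scale br L (K \<inter> ?A)" by (rule ideal_inter[OF K ann_ideal[OF L K]])
  have N: "\<not> (\<exists>x\<in>K \<inter> ?A. \<exists>y\<in>K \<inter> ?A. br x y \<noteq> 0)"
    by blast
  have "ideal_of scale br L (K \<inter> ?A) \<and> K \<inter> ?A \<noteq> {0} \<longrightarrow> (\<exists>x\<in>K \<inter> ?A. \<exists>y\<in>K \<inter> ?A. br x y \<noteq> 0)"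
    by (rule spec[OF sp[unfolded semiprime_def]])
  hence "K \<inter> ?A = {0}" using N T by (meson conjI mp)
  moreover have "m \<in> K \<inter> ?A" using m mk K unfolding ideal_of_def by auto
  ultimately show ?thesis by auto
qed

lemma E1:
  assumes L: "subalg scale br L" and sp: "semiprime scale br L" and K: "essential_ideal scale br L K"
    and w: "w \<in> L" and wk: "\<And>k. k \<in> K \<Longrightarrow> br k w = 0 \<and> br w k = 0"
  shows "w = 0"
proof -
  let ?A = "{w\<in>L. \<forall>k\<in>K. br k w = 0 \<and> br w k = 0}"
  have KI: "ideal_of scale br L K" using K unfolding essential_ideal_def by auto
  have AI: "ideal_of scale br L ?A" by (rule ann_ideal[OF L KI])
  have "K \<inter> ?A \<subseteq> {0}"
  proof
    fix m assume "m \<in> K \<inter> ?A"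
    hence "m \<in> K" "\<And>k. k \<in> K \<Longrightarrow> br k m = 0 \<and> br m k = 0" by auto
    from S1[OF L sp KI this] show "m \<in> {0}" by simp
  qed
  moreover have "0 \<in> K \<inter> ?A" using ideal_sub[OF KI] ideal_sub[OF AI] V.subspace_0 by blast
  ultimately have "K \<inter> ?A = {0}" by auto
  moreover have "ideal_of scale br L ?A \<and> ?A \<noteq> {0} \<longrightarrow> K \<inter> ?A \<noteq> {0}"
    by (rule spec[OF conjunct2[OF K[unfolded essential_ideal_def]]])
  ultimately have "?A = {0}" using AI by (meson conjI mp)
  thus ?thesis using w wk by auto
qed


lemma SP0:
  assumes sp: "semiprime scale br L" and K: "ideal_of scale br L K"
    and z: "\<And>x y. x \<in> K \<Longrightarrow> y \<in> K \<Longrightarrow> br x y = 0"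
  shows "K = {0}"
proof -
  have "ideal_of scale br L K \<and> K \<noteq> {0} \<longrightarrow> (\<exists>x\<in>K. \<exists>y\<in>K. br x y \<noteq> 0)"
    by (rule spec[OF sp[unfolded semiprime_def]])
  moreover have "\<not> (\<exists>x\<in>K. \<exists>y\<in>K. br x y \<noteq> 0)" using z by blast
  ultimately show ?thesis using K by (meson conjI mp)
qed

lemma ESS0:
  assumes K: "essential_ideal scale br L K" and A: "ideal_of scale br L A"
    and z: "K \<inter> A = {0}"
  shows "A = {0}"
proof -
  have "ideal_of scale br L A \<and> A \<noteq> {0} \<longrightarrow> K \<inter> A \<noteq> {0}"
    by (rule spec[OF conjunct2[OF K[unfolded essential_ideal_def]]])
  thus ?thesis using A z by (meson conjI mp)
qed

lemma mult_mono:
  assumes "I \<subseteq> L" "f \<in> mult_alg scale br I"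
  shows "f \<in> mult_alg scale br L"
  using assms(2)
proof (induction rule: mult_alg.induct)
  case (R_gen x) thus ?case using assms(1) by (auto intro: mult_alg.R_gen)
next
  case (L_gen x) thus ?case using assms(1) by (auto intro: mult_alg.L_gen)
next
  case (comp f g) from mult_alg.comp[OF comp.IH] show ?case .
next
  case (add f g) thus ?case by (auto intro: mult_alg.add)
next
  case (smult f c) thus ?case by (auto intro: mult_alg.smult)
qed

lemma gen_mono: "I \<subseteq> L \<Longrightarrow> gen_by scale br I q \<subseteq> gen_by scale br L q"
  unfolding gen_by_def using mult_mono by blast

lemma gen_self: "q \<in> gen_by scale br K q"
proof -
  have "q = scale 1 q + 0" by simp
  thus ?thesis unfolding gen_by_def by blast
qed

lemma gen_intro:
  assumes "\<xi> \<in> mult_alg scale br K" shows "\<xi> q \<in> gen_by scale br K q"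
proof -
  have "\<xi> q = scale 0 q + \<xi> q" by simp
  thus ?thesis unfolding gen_by_def using assms by blast
qed

lemma gen_L:
  assumes l: "l \<in> K" and u: "u \<in> gen_by scale br K q"
  shows "br l u \<in> gen_by scale br K q \<and> br u l \<in> gen_by scale br K q"
proof -
  obtain c s where us: "u = scale c q + s" and s: "s = 0 \<or> (\<exists>\<xi>\<in>mult_alg scale br K. s = \<xi> q)"
    using u unfolding gen_by_def by blast
  have Lg: "(\<lambda>v. br l v) \<in> mult_alg scale br K" by (rule mult_alg.L_gen[OF l])
  have Rg: "(\<lambda>v. br v l) \<in> mult_alg scale br K" by (rule mult_alg.R_gen[OF l])
  have z: "scale 0 q = 0" by simp
  from s show ?thesis
  proof
    assume s0: "s = 0"
    have e1: "br l u = scale 0 q + (\<lambda>v. scale c (br l v)) q" using us s0 z by (simp add: scr)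
    have e2: "br u l = scale 0 q + (\<lambda>v. scale c (br v l)) q" using us s0 z by (simp add: scl)
    have m1: "(\<lambda>v. scale c (br l v)) \<in> mult_alg scale br K" by (rule mult_alg.smult[OF Lg])
    have m2: "(\<lambda>v. scale c (br v l)) \<in> mult_alg scale br K" by (rule mult_alg.smult[OF Rg])
    show ?thesis using e1 e2 gen_intro[OF m1, of q] gen_intro[OF m2, of q] z by simp
  next
    assume "\<exists>\<xi>\<in>mult_alg scale br K. s = \<xi> q"
    then obtain \<xi> where xi: "\<xi> \<in> mult_alg scale br K" and sx: "s = \<xi> q" by blast
    have m1: "(\<lambda>v. scale c (br l v) + ((\<lambda>v. br l v) \<circ> \<xi>) v) \<in> mult_alg scale br K"
      by (rule mult_alg.add[OF mult_alg.smult[OF Lg] mult_alg.comp[OF Lg xi]])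
    have m2: "(\<lambda>v. scale c (br v l) + ((\<lambda>v. br v l) \<circ> \<xi>) v) \<in> mult_alg scale br K"
      by (rule mult_alg.add[OF mult_alg.smult[OF Rg] mult_alg.comp[OF Rg xi]])
    have e1: "br l u = scale 0 q + (\<lambda>v. scale c (br l v) + ((\<lambda>v. br l v) \<circ> \<xi>) v) q"
      using us sx z by (simp add: scr addr)
    have e2: "br u l = scale 0 q + (\<lambda>v. scale c (br v l) + ((\<lambda>v. br v l) \<circ> \<xi>) v) q"
      using us sx z by (simp add: scl addl)
    show ?thesis using e1 e2 gen_intro[OF m1, of q] gen_intro[OF m2, of q] z by simp
  qed
qed

lemma D_ideal:
  assumes L: "subalg scale br L"
  shows "ideal_of scale br L (colon scale br L q)"
proof -
  have LS: "V.subspace L" and LC: "\<And>x y. x \<in> L \<Longrightarrow> y \<in> L \<Longrightarrow> br x y \<in> L"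
    using L unfolding subalg_def by auto
  let ?D = "colon scale br L q"
  have Dd: "x \<in> ?D \<longleftrightarrow> x \<in> L \<and> (\<forall>u\<in>gen_by scale br L q. br x u \<in> L \<and> br u x \<in> L)" for x
    unfolding colon_def by simp
  have GL: "\<And>l u. l \<in> L \<Longrightarrow> u \<in> gen_by scale br L q \<Longrightarrow> br l u \<in> gen_by scale br L q \<and> br u l \<in> gen_by scale br L q"
    by (rule gen_L)
  show ?thesis unfolding ideal_of_def
  proof (intro conjI)
    show "?D \<subseteq> L" using Dd by blast
    show "V.subspace ?D"
    proof (rule V.subspaceI)
      show "0 \<in> ?D" using V.subspace_0[OF LS] Dd by simp
      fix x y c assume x: "x \<in> ?D"
      show "scale c x \<in> ?D"
        using x V.subspace_scale[OF LS] Dd by (simp add: scl scr)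
      assume y: "y \<in> ?D"
      show "x + y \<in> ?D"
        using x y V.subspace_add[OF LS] Dd by (simp add: addl addr)
    qed
    show "\<forall>x\<in>?D. \<forall>y\<in>L. br x y \<in> ?D \<and> br y x \<in> ?D"
    proof (intro ballI conjI)
      fix x l assume x: "x \<in> ?D" and l: "l \<in> L"
      have xL: "x \<in> L" and xu: "\<And>u. u \<in> gen_by scale br L q \<Longrightarrow> br x u \<in> L \<and> br u x \<in> L"
        using x Dd by auto
      show "br x l \<in> ?D" unfolding Dd
      proof (intro conjI ballI)
        show "br x l \<in> L" using LC xL l by simp
        fix u assume u: "u \<in> gen_by scale br L q"
        have "br (br x l) u = br x (br l u) + br (br x u) l" by (rule leib2)
        moreover have "br x (br l u) \<in> L" using xu GL[OF l u] by simp
        moreover have "br (br x u) l \<in> L" using xu[OF u] LC l by simp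
        ultimately show "br (br x l) u \<in> L" using V.subspace_add[OF LS] by simp
        have "br u (br x l) = br (br u x) l - br (br u l) x" by (rule leib)
        moreover have "br (br u l) x \<in> L" using xu GL[OF l u] by simp
        moreover have "br (br u x) l \<in> L" using xu[OF u] LC l by simp
        ultimately show "br u (br x l) \<in> L" using V.subspace_diff[OF LS] by simp
      qed
      show "br l x \<in> ?D" unfolding Dd
      proof (intro conjI ballI)
        show "br l x \<in> L" using LC xL l by simp
        fix u assume u: "u \<in> gen_by scale br L q"
        have "br (br l x) u = br l (br x u) + br (br l u) x" by (rule leib2)
        moreover have "br (br l u) x \<in> L" using xu GL[OF l u] by simp
        moreover have "br l (br x u) \<in> L" using xu[OF u] LC l by simp
        ultimately show "br (br l x) u \<in> L" using V.subspace_add[OF LS] by simp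
        have "br u (br l x) = br (br u l) x - br (br u x) l" by (rule leib)
        moreover have "br (br u l) x \<in> L" using xu GL[OF l u] by simp
        moreover have "br (br u x) l \<in> L" using xu[OF u] LC l by simp
        ultimately show "br u (br l x) \<in> L" using V.subspace_diff[OF LS] by simp
      qed
    qed
  qed
qed


lemma D_ess:
  assumes L: "subalg scale br L" and Q: "alg_of_quotients scale br L"
    and K: "ideal_of scale br L K" and K0: "K \<noteq> {0}"
  shows "K \<inter> colon scale br L q \<noteq> {0}"
proof
  assume KD: "K \<inter> colon scale br L q = {0}"
  have DI: "ideal_of scale br L (colon scale br L q)" by (rule D_ideal[OF L])
  have "0 \<in> K" using ideal_sub[OF K] V.subspace_0 by blast
  then obtain k where k: "k \<in> K" "k \<noteq> 0" using K0 by blast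
  have kL: "k \<in> L" using K k unfolding ideal_of_def by auto
  have DL: "colon scale br L q \<subseteq> L" using DI unfolding ideal_of_def by auto
  have "(\<exists>x\<in>colon scale br L q. br x k \<noteq> 0) \<or> (\<exists>y\<in>colon scale br L q. br k y \<noteq> 0)"
    using Q k(2) unfolding alg_of_quotients_def by blast
  then show False
  proof
    assume "\<exists>x\<in>colon scale br L q. br x k \<noteq> 0"
    then obtain x where x: "x \<in> colon scale br L q" "br x k \<noteq> 0" by blast
    have "br x k \<in> K" using K k(1) x(1) DL unfolding ideal_of_def by blast
    moreover have "br x k \<in> colon scale br L q" using DI x(1) kL unfolding ideal_of_def by blast
    ultimately show False using KD x(2) by blast
  next
    assume "\<exists>x\<in>colon scale br L q. br k x \<noteq> 0"
    then obtain x where x: "x \<in> colon scale br L q" "br k x \<noteq> 0" by blast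
    have "br k x \<in> K" using K k(1) x(1) DL unfolding ideal_of_def by blast
    moreover have "br k x \<in> colon scale br L q" using DI x(1) kL unfolding ideal_of_def by blast
    ultimately show False using KD x(2) by blast
  qed
qed

lemma JJ:
  assumes I: "ideal_of scale br L I" and a: "a \<in> I \<inter> colon scale br L q" and c: "c \<in> I \<inter> colon scale br L q"
  shows "br a c \<in> colon scale br I q"
proof -
  have IL: "I \<subseteq> L" and IS: "V.subspace I" and IC: "\<And>x y. x \<in> I \<Longrightarrow> y \<in> L \<Longrightarrow> br x y \<in> I \<and> br y x \<in> I"
    using I unfolding ideal_of_def by auto
  have aI: "a \<in> I" and au: "\<And>u. u \<in> gen_by scale br L q \<Longrightarrow> br a u \<in> L \<and> br u a \<in> L"
    using a unfolding colon_def by auto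
  have cI: "c \<in> I" and cu: "\<And>u. u \<in> gen_by scale br L q \<Longrightarrow> br c u \<in> L \<and> br u c \<in> L"
    using c unfolding colon_def by auto
  have acI: "br a c \<in> I" using IC aI cI IL by blast
  show ?thesis unfolding colon_def
  proof (intro CollectI conjI ballI acI)
    fix u assume "u \<in> gen_by scale br I q"
    hence u: "u \<in> gen_by scale br L q" using gen_mono[OF IL] by blast
    have "br (br a c) u = br a (br c u) + br (br a u) c" by (rule leib2)
    moreover have "br a (br c u) \<in> I" using IC aI cu[OF u] by blast
    moreover have "br (br a u) c \<in> I" using IC cI au[OF u] by blast
    ultimately show "br (br a c) u \<in> I" using V.subspace_add[OF IS] by simp
    have "br u (br a c) = br (br u a) c - br (br u c) a" by (rule leib)
    moreover have "br (br u a) c \<in> I" using IC cI au[OF u] by blast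
    moreover have "br (br u c) a \<in> I" using IC aI cu[OF u] by blast
    ultimately show "br u (br a c) \<in> I" using V.subspace_diff[OF IS] by simp
  qed
qed

lemma E2:
  assumes L: "subalg scale br L" and sp: "semiprime scale br L" and J: "essential_ideal scale br L J"
    and w: "w \<in> L" and wk: "\<And>a c. a \<in> J \<Longrightarrow> c \<in> J \<Longrightarrow> br (br a c) w = 0 \<and> br w (br a c) = 0"
  shows "w = 0"
proof -
  have LS: "V.subspace L" and LC: "\<And>x y. x \<in> L \<Longrightarrow> y \<in> L \<Longrightarrow> br x y \<in> L"
    using L unfolding subalg_def by auto
  have JI: "ideal_of scale br L J" using J unfolding essential_ideal_def by auto
  have JC: "\<And>x y. x \<in> J \<Longrightarrow> y \<in> L \<Longrightarrow> br x y \<in> J \<and> br y x \<in> J" and JL: "J \<subseteq> L"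
    using JI unfolding ideal_of_def by auto
  define A where "A = {w\<in>L. \<forall>a\<in>J. \<forall>c\<in>J. br (br a c) w = 0 \<and> br w (br a c) = 0}"
  have Ad: "x \<in> A \<longleftrightarrow> x \<in> L \<and> (\<forall>a\<in>J. \<forall>c\<in>J. br (br a c) x = 0 \<and> br x (br a c) = 0)" for x
    unfolding A_def by simp
  have AI: "ideal_of scale br L A" unfolding ideal_of_def
  proof (intro conjI)
    show "A \<subseteq> L" using Ad by blast
    show "V.subspace A"
    proof (rule V.subspaceI)
      show "0 \<in> A" using V.subspace_0[OF LS] Ad by simp
      fix x y c assume x: "x \<in> A"
      show "scale c x \<in> A"
        using x V.subspace_scale[OF LS] Ad by (simp add: scl scr)
      assume y: "y \<in> A"
      show "x + y \<in> A"
        using x y V.subspace_add[OF LS] Ad by (simp add: addl addr)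
    qed
    show "\<forall>x\<in>A. \<forall>y\<in>L. br x y \<in> A \<and> br y x \<in> A"
    proof (intro ballI conjI)
      fix x l assume x: "x \<in> A" and l: "l \<in> L"
      have xL: "x \<in> L" and xa: "\<And>a c. a \<in> J \<Longrightarrow> c \<in> J \<Longrightarrow> br (br a c) x = 0 \<and> br x (br a c) = 0"
        using x Ad by auto
      have zl: "br (br (br a c) l) x = 0" if a: "a \<in> J" and c: "c \<in> J" for a c
      proof -
        have "br (br a c) l = br a (br c l) + br (br a l) c" by (rule leib2)
        hence "br (br (br a c) l) x = br (br a (br c l)) x + br (br (br a l) c) x" by (simp add: addl)
        thus ?thesis using xa a c JC l by simp
      qed
      have lz: "br (br l (br a c)) x = 0" if a: "a \<in> J" and c: "c \<in> J" for a c
      proof -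
        have "br l (br a c) = br (br l a) c - br (br l c) a" by (rule leib)
        hence "br (br l (br a c)) x = br (br (br l a) c) x - br (br (br l c) a) x" by (simp add: diffl)
        thus ?thesis using xa a c JC l by simp
      qed
      have xlz: "br x (br l (br a c)) = 0" if a: "a \<in> J" and c: "c \<in> J" for a c
      proof -
        have "br l (br a c) = br (br l a) c - br (br l c) a" by (rule leib)
        hence "br x (br l (br a c)) = br x (br (br l a) c) - br x (br (br l c) a)" by (simp add: diffr)
        thus ?thesis using xa a c JC l by simp
      qed
      show "br x l \<in> A" unfolding Ad
      proof (intro conjI ballI)
        show "br x l \<in> L" using LC xL l by simp
        fix a c assume a: "a \<in> J" and c: "c \<in> J"
        have "br (br a c) (br x l) = br (br (br a c) x) l - br (br (br a c) l) x" by (rule leib)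
        thus "br (br a c) (br x l) = 0" using xa[OF a c] zl[OF a c] by simp
        have "br (br x l) (br a c) = br x (br l (br a c)) + br (br x (br a c)) l" by (rule leib2)
        thus "br (br x l) (br a c) = 0" using xa[OF a c] xlz[OF a c] by simp
      qed
      show "br l x \<in> A" unfolding Ad
      proof (intro conjI ballI)
        show "br l x \<in> L" using LC xL l by simp
        fix a c assume a: "a \<in> J" and c: "c \<in> J"
        have "br (br a c) (br l x) = br (br (br a c) l) x - br (br (br a c) x) l" by (rule leib)
        thus "br (br a c) (br l x) = 0" using xa[OF a c] zl[OF a c] by simp
        have "br (br l x) (br a c) = br l (br x (br a c)) + br (br l (br a c)) x" by (rule leib2)
        thus "br (br l x) (br a c) = 0" using xa[OF a c] lz[OF a c] by simp
      qed
    qed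
  qed
  have MI: "ideal_of scale br L (J \<inter> A)" by (rule ideal_inter[OF JI AI])
  have MC: "\<And>x y. x \<in> J \<inter> A \<Longrightarrow> y \<in> L \<Longrightarrow> br x y \<in> J \<inter> A" and MsubL: "J \<inter> A \<subseteq> L"
    using MI unfolding ideal_of_def by auto
  have "J \<inter> A = {0}"
  proof (rule SP0[OF sp MI])
    fix m1 m2 assume m1: "m1 \<in> J \<inter> A" and m2: "m2 \<in> J \<inter> A"
    show "br m1 m2 = 0"
    proof (rule S1[OF L sp MI])
      show "br m1 m2 \<in> J \<inter> A" using MC m1 m2 MsubL by blast
      fix k assume "k \<in> J \<inter> A"
      thus "br k (br m1 m2) = 0 \<and> br (br m1 m2) k = 0" using m1 m2 Ad by auto
    qed
  qed
  hence "A = {0}" by (rule ESS0[OF J AI])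
  moreover have "w \<in> A" using w wk Ad by auto
  ultimately show ?thesis by simp
qed


lemma main:
  assumes L: "subalg scale br L" and sp: "semiprime scale br L"
    and Q: "alg_of_quotients scale br L" and I: "essential_ideal scale br L I"
  shows "alg_of_quotients scale br I"
  unfolding alg_of_quotients_def
proof (intro allI impI)
  fix p q :: 'v assume p0: "p \<noteq> 0"
  show "(\<exists>x\<in>colon scale br I q. br x p \<noteq> 0) \<or> (\<exists>y\<in>colon scale br I q. br p y \<noteq> 0)"
  proof (rule ccontr)
    assume "\<not> ?thesis"
    hence H0: "\<And>z. z \<in> colon scale br I q \<Longrightarrow> br z p = 0 \<and> br p z = 0" by blast
    have LC: "\<And>x y. x \<in> L \<Longrightarrow> y \<in> L \<Longrightarrow> br x y \<in> L"
      using L unfolding subalg_def by auto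
    have II: "ideal_of scale br L I" using I unfolding essential_ideal_def by auto
    let ?D = "colon scale br L q"
    define J where "J = I \<inter> ?D"
    have DI: "ideal_of scale br L ?D" by (rule D_ideal[OF L])
    have JI: "ideal_of scale br L J" unfolding J_def by (rule ideal_inter[OF II DI])
    have JC: "\<And>x y. x \<in> J \<Longrightarrow> y \<in> L \<Longrightarrow> br x y \<in> J \<and> br y x \<in> J" and JL: "J \<subseteq> L"
      using JI unfolding ideal_of_def by auto
    have JE: "essential_ideal scale br L J" unfolding essential_ideal_def
    proof (intro conjI allI impI JI)
      fix K assume K: "ideal_of scale br L K \<and> K \<noteq> {0}"
      have KD: "ideal_of scale br L (K \<inter> ?D)" using ideal_inter[OF _ DI] K by blast
      have "K \<inter> ?D \<noteq> {0}" using D_ess[OF L Q] K by blast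
      hence "I \<inter> (K \<inter> ?D) \<noteq> {0}" using I KD unfolding essential_ideal_def by blast
      moreover have "I \<inter> (K \<inter> ?D) = J \<inter> K" unfolding J_def by blast
      ultimately show "J \<inter> K \<noteq> {0}" by simp
    qed
    have H: "\<And>a c. a \<in> J \<Longrightarrow> c \<in> J \<Longrightarrow> br (br a c) p = 0 \<and> br p (br a c) = 0"
      using H0 JJ[OF II] unfolding J_def by blast
    have H2: "br (br (br a c) x) p = 0 \<and> br p (br (br a c) x) = 0 \<and>
              br (br x (br a c)) p = 0 \<and> br p (br x (br a c)) = 0"
      if a: "a \<in> J" and c: "c \<in> J" and x: "x \<in> L" for a c x
    proof -
      have e1: "br (br a c) x = br a (br c x) + br (br a x) c" by (rule leib2)
      have e2: "br x (br a c) = br (br x a) c - br (br x c) a" by (rule leib)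
      have j: "br c x \<in> J" "br a x \<in> J" "br x a \<in> J" "br x c \<in> J" using JC a c x by auto
      show ?thesis
        using H[OF a j(1)] H[OF j(2) c] H[OF j(3) c] H[OF j(4) a]
        by (simp add: e1 e2 addl addr diffl diffr)
    qed
    obtain x where x: "x \<in> colon scale br L p" and nz: "br x p \<noteq> 0 \<or> br p x \<noteq> 0"
      using Q p0 unfolding alg_of_quotients_def by blast
    have xL: "x \<in> L" using x unfolding colon_def by auto
    have pg: "p \<in> gen_by scale br L p" by (rule gen_self)
    have wL: "br x p \<in> L" "br p x \<in> L" using x pg unfolding colon_def by auto
    have "br x p = 0"
    proof (rule E2[OF L sp JE wL(1)])
      fix a c assume a: "a \<in> J" and c: "c \<in> J"
      have e1: "br (br a c) (br x p) = br (br (br a c) x) p - br (br (br a c) p) x" by (rule leib)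
      have e2: "br (br x p) (br a c) = br x (br p (br a c)) + br (br x (br a c)) p" by (rule leib2)
      show "br (br a c) (br x p) = 0 \<and> br (br x p) (br a c) = 0"
        using H[OF a c] H2[OF a c xL] by (simp add: e1 e2)
    qed
    moreover have "br p x = 0"
    proof (rule E2[OF L sp JE wL(2)])
      fix a c assume a: "a \<in> J" and c: "c \<in> J"
      have e1: "br (br a c) (br p x) = br (br (br a c) p) x - br (br (br a c) x) p" by (rule leib)
      have e2: "br (br p x) (br a c) = br p (br x (br a c)) + br (br p (br a c)) x" by (rule leib2)
      show "br (br a c) (br p x) = 0 \<and> br (br p x) (br a c) = 0"
        using H[OF a c] H2[OF a c xL] by (simp add: e1 e2)
    qed
    ultimately show False using nz by simp
  qed
qed

end

theorem proposition3p13: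
  fixes scale :: "'k::field \<Rightarrow> 'v::ab_group_add \<Rightarrow> 'v"
    and br :: "'v \<Rightarrow> 'v \<Rightarrow> 'v"
    and L I :: "'v set"
  assumes "leibniz_alg scale br"
    and "subalg scale br L"
    and "semiprime scale br L"
    and "alg_of_quotients scale br L"
    and "essential_ideal scale br L I"
  shows "alg_of_quotients scale br I"
proof -
  interpret lb scale br by (rule lb.intro[OF assms(1)])
  show ?thesis by (rule main[OF assms(2-5)])
qed

end
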